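(* Let $I\subset[0,\infty)$ be an interval, let $a,b\in I^\circ$ with $a<b$, and let $f:I\to\mathbb{R}$ be twice differentiable on $I^\circ$ with $f''\in L^1([a,b])$. Let $q>1$, $p=\frac{q}{q-1}$, assume $h(\frac12)>0$ and that $|f''|^q$ is $h$-concave on $[a,b]$. Then $$\left|\frac{1}{b-a}\int_a^b f(x)\,dx-f\Big(\frac{a+b}{2}\Big)\right|\le \frac{(b-a)^2}{4}\Big(\frac{1}{2p+1}\Big)^{1/p}\Big(\frac{1}{2h(\frac12)}\Big)^{1/q}\Big|f''\Big(\frac{a+b}{2}\Big)\Big|.$$
   Context: Let $J$ be an interval with $(0,1)\subseteq J$ and $h:J\to\mathbb{R}$ a non-negative function, not identically zero. A non-negative function $g$ defined on an interval $K$ is called $h$-concave on $K$ if for all $x,y\in K$ and all $t\in(0,1)$: $g(tx+(1-t)y)\ge h(t)g(x)+h(1-t)g(y)$. $I^\circ$ denotes the interior of $I$. *)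

theory Defs
  imports "HOL-Analysis.Analysis"
begin

definition admissible_h :: "real set \<Rightarrow> (real \<Rightarrow> real) \<Rightarrow> bool" where
  "admissible_h J h \<longleftrightarrow> is_interval J \<and> {0<..<1} \<subseteq> J \<and>
     (\<forall>t\<in>J. 0 \<le> h t) \<and> (\<exists>t\<in>J. h t \<noteq> 0)"

definition h_concave_on :: "(real \<Rightarrow> real) \<Rightarrow> real set \<Rightarrow> (real \<Rightarrow> real) \<Rightarrow> bool" where
  "h_concave_on h K g \<longleftrightarrow> (\<forall>x\<in>K. 0 \<le> g x) \<and>
     (\<forall>x\<in>K. \<forall>y\<in>K. \<forall>t\<in>{0<..<1}.
        g (t * x + (1 - t) * y) \<ge> h t * g x + h (1 - t) * g y)"

end

theory Submission
  imports Defs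
begin

lemma const_bound:
  fixes p q :: real
  assumes q: "q > 1" and p: "p = q / (q - 1)"
  shows "(2*p+1) powr (1/p) \<le> 3" and "2 powr (1/q) \<le> 2"
proof -
  have p1: "p > 1" using q unfolding p by (simp add: less_divide_eq)
  have l3: "ln 3 \<ge> (1::real)"
  proof -
    have "ln (exp 1) \<le> ln (3::real)" using exp_le by (subst ln_le_cancel_iff) auto
    thus ?thesis by simp
  qed
  have "ln (2*p+1) \<le> ln (3*p)" using p1 by simp
  also have "\<dots> = ln 3 + ln p" using p1 by (simp add: ln_mult)
  also have "\<dots> \<le> ln 3 + (p - 1)" using ln_le_minus_one[of p] p1 by simp
  also have "\<dots> \<le> p * ln 3"
  proof -
    have "(p-1)*1 \<le> (p-1)*ln 3" using l3 p1 by (intro mult_left_mono) auto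
    thus ?thesis by (simp add: algebra_simps)
  qed
  finally have "ln (2*p+1) / p \<le> ln 3" using p1 by (simp add: field_simps)
  hence "ln ((2*p+1) powr (1/p)) \<le> ln 3" using p1 by (simp add: ln_powr)
  thus "(2*p+1) powr (1/p) \<le> 3" using p1 by (subst (asm) ln_le_cancel_iff) auto
  have "2 powr (1/q) \<le> 2 powr (1::real)" using q by (intro powr_mono) auto
  thus "2 powr (1/q) \<le> 2" by simp
qed

lemma d1: "((\<lambda>x::real. c * x + d * (x - m)^2 / 2) has_real_derivative (c + d * (x - m))) (at x within S)"
  by (auto intro!: derivative_eq_intros simp: field_simps)

lemma d2: "((\<lambda>x::real. M / 6 * (x - m)^3) has_real_derivative (M / 2 * (x - m)^2)) (at x within S)"
  by (auto intro!: derivative_eq_intros simp: algebra_simps)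

lemma inv_le3: "0 < (X::real) \<Longrightarrow> X \<le> c \<Longrightarrow> 1/c \<le> 1/X"
  by (simp add: frac_le)

theorem theorem13:
  fixes J I :: "real set" and h f f' f'' :: "real \<Rightarrow> real" and a b q p :: real
  assumes hJ: "admissible_h J h"
    and I: "is_interval I" "I \<subseteq> {0..}"
    and ab: "a \<in> interior I" "b \<in> interior I" "a < b"
    and f': "\<And>x. x \<in> interior I \<Longrightarrow> (f has_real_derivative f' x) (at x)"
    and f'': "\<And>x. x \<in> interior I \<Longrightarrow> (f' has_real_derivative f'' x) (at x)"
    and L1: "set_integrable lborel {a..b} f''"
    and q: "q > 1" and p: "p = q / (q - 1)"
    and h_half: "h (1/2) > 0"
    and conc: "h_concave_on h {a..b} (\<lambda>x. \<bar>f'' x\<bar> powr q)"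
  shows "\<bar>integral {a..b} f / (b - a) - f ((a + b) / 2)\<bar>
           \<le> (b - a)^2 / 4 * (1 / (2 * p + 1)) powr (1 / p)
              * (1 / (2 * h (1/2))) powr (1 / q) * \<bar>f'' ((a + b) / 2)\<bar>"
proof -
  define m where "m = (a + b) / 2"
  define L where "L = b - a"
  define H where "H = h (1/2)"
  define M where "M = \<bar>f'' m\<bar> * (1 / H) powr (1 / q)"
  have L: "L > 0" using ab unfolding L_def by simp
  have H: "H > 0" using h_half unfolding H_def by simp
  have sub: "{a..b} \<subseteq> interior I"
  proof -
    have "is_interval (interior I)" using I(1) by (simp add: is_interval_convex_1)
    hence iv: "\<forall>u\<in>interior I. \<forall>v\<in>interior I. \<forall>x. u \<le> x \<and> x \<le> v \<longrightarrow> x \<in> interior I"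
      by (simp only: is_interval_1)
    show ?thesis
    proof
      fix x assume "x \<in> {a..b}"
      hence "a \<le> x \<and> x \<le> b" by simp
      thus "x \<in> interior I" using iv ab(1,2) by blast
    qed
  qed
  have mab: "m \<in> {a..b}" using ab unfolding m_def by simp
  have bound: "\<bar>f'' x\<bar> \<le> M" if x: "x \<in> {a..b}" for x
  proof -
    define g where "g = (\<lambda>x. \<bar>f'' x\<bar> powr q)"
    have y: "a + b - x \<in> {a..b}" using x by auto
    have g0: "\<forall>x\<in>{a..b}. 0 \<le> g x" unfolding g_def by simp
    have all: "\<forall>x\<in>{a..b}. \<forall>y\<in>{a..b}. \<forall>t\<in>{0<..<1}. g (t * x + (1 - t) * y) \<ge> h t * g x + h (1 - t) * g y"
      using conc unfolding h_concave_on_def g_def by blast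
    have "g (1/2 * x + (1 - 1/2) * (a + b - x)) \<ge> h (1/2) * g x + h (1 - 1/2) * g (a+b-x)"
      using all[rule_format, OF x y, of "1/2"] by simp
    moreover have "1/2 * x + (1 - 1/2) * (a + b - x) = m" unfolding m_def by (simp add: field_simps)
    ultimately have "g m \<ge> H * g x + H * g (a+b-x)" unfolding H_def by simp
    moreover have "H * g (a+b-x) \<ge> 0" using H g0 y by simp
    ultimately have "H * g x \<le> g m" by linarith
    hence gx: "g x \<le> g m / H" using H by (simp add: field_simps)
    have gx0: "0 \<le> g x" using g0 x by blast
    have "\<bar>f'' x\<bar> = g x powr (1/q)" unfolding g_def using q by (simp add: powr_powr)
    also have "\<dots> \<le> (g m / H) powr (1/q)" using powr_mono2[OF _ gx0 gx, of "1/q"] q by simp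
    also have "\<dots> = g m powr (1/q) * (1/H) powr (1/q)"
      using H g0 mab by (simp add: powr_divide)
    also have "g m powr (1/q) = \<bar>f'' m\<bar>" unfolding g_def using q by (simp add: powr_powr)
    finally show ?thesis unfolding M_def .
  qed
  have M0: "M \<ge> 0" unfolding M_def by simp
  have taylor: "\<bar>f x - (f m + f' m * (x - m))\<bar> \<le> M / 2 * (x - m)^2" if x: "x \<in> {a..b}" for x
  proof (cases "x = m")
    case True thus ?thesis by simp
  next
    case False
    define diff where "diff = (\<lambda>n::nat. if n = 0 then f else if n = 1 then f' else f'')"
    have "\<exists>t. (if x < m then x < t \<and> t < m else m < t \<and> t < x) \<and>
      f x = (\<Sum>n<2. (diff n m / fact n) * (x - m)^n) + (diff 2 t / fact 2) * (x - m)^2"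
    proof (rule Taylor[of 2 diff f a b])
      show "\<forall>n t. n < 2 \<and> a \<le> t \<and> t \<le> b \<longrightarrow> DERIV (diff n) t :> diff (Suc n) t"
      proof (intro allI impI)
        fix n t assume a: "n < (2::nat) \<and> a \<le> t \<and> t \<le> b"
        hence "t \<in> {a..b}" by simp
        hence ti: "t \<in> interior I" using sub by (rule subsetD[rotated])
        from a have "n = 0 \<or> n = 1" by auto
        thus "DERIV (diff n) t :> diff (Suc n) t"
          using f'[OF ti] f''[OF ti] unfolding diff_def by auto
      qed
    qed (use x mab False in \<open>simp_all add: diff_def\<close>)
    then obtain t where t: "(if x < m then x < t \<and> t < m else m < t \<and> t < x)"
      and eq: "f x = (\<Sum>n<2. (diff n m / fact n) * (x - m)^n) + (diff 2 t / fact 2) * (x - m)^2"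
      by blast
    have tab: "t \<in> {a..b}" using t x mab by (auto split: if_splits)
    have eq2: "f x - (f m + f' m * (x - m)) = f'' t / 2 * (x - m)^2"
      using eq by (simp add: diff_def numeral_2_eq_2 lessThan_Suc)
    have "\<bar>f'' t / 2 * (x - m)^2\<bar> = \<bar>f'' t\<bar> / 2 * (x - m)^2" by (simp add: abs_mult)
    also have "\<dots> \<le> M / 2 * (x - m)^2" using bound[OF tab] by (intro mult_right_mono) auto
    finally show ?thesis unfolding eq2 .
  qed
  have contf: "continuous_on {a..b} f"
  proof (rule continuous_at_imp_continuous_on, rule ballI)
    fix x assume "x \<in> {a..b}"
    hence "x \<in> interior I" using sub by (rule subsetD[rotated])
    thus "isCont f x" by (rule DERIV_isCont[OF f'])
  qed
  have intf: "f integrable_on {a..b}" by (rule integrable_continuous_interval[OF contf])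
  have lin: "((\<lambda>x. f m + f' m * (x - m)) has_integral (L * f m)) {a..b}"
  proof -
    have I1: "((\<lambda>x. f m + f' m * (x - m)) has_integral
        ((f m * b + f' m * (b - m)^2 / 2) - (f m * a + f' m * (a - m)^2 / 2))) {a..b}"
      using ab by (intro fundamental_theorem_of_calculus)
        (auto simp only: has_real_derivative_iff_has_vector_derivative[symmetric] intro: d1)
    moreover have E1: "(f m * b + f' m * (b - m)^2 / 2) - (f m * a + f' m * (a - m)^2 / 2) = L * f m"
      unfolding L_def m_def by (simp add: field_simps power2_eq_square)
    ultimately show ?thesis using I1 unfolding E1 by simp
  qed
  have quad: "((\<lambda>x. M / 2 * (x - m)^2) has_integral (M * L^3 / 24)) {a..b}"
  proof -
    have I1: "((\<lambda>x. M / 2 * (x - m)^2) has_integral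
        (M / 6 * (b - m)^3 - M / 6 * (a - m)^3)) {a..b}"
      using ab by (intro fundamental_theorem_of_calculus)
        (auto simp only: has_real_derivative_iff_has_vector_derivative[symmetric] intro: d2)
    moreover have E1: "M / 6 * (b - m)^3 - M / 6 * (a - m)^3 = M * L^3 / 24"
      unfolding L_def m_def by (simp add: field_simps power3_eq_cube)
    show ?thesis using I1 unfolding E1 .
  qed
  have diffint: "((\<lambda>x. f x - (f m + f' m * (x - m))) has_integral (integral {a..b} f - L * f m)) {a..b}"
    using has_integral_diff[OF integrable_integral[OF intf] lin] by simp
  have "norm (integral {a..b} (\<lambda>x. f x - (f m + f' m * (x - m)))) \<le> integral {a..b} (\<lambda>x. M / 2 * (x - m)^2)"
    by (rule integral_norm_bound_integral[OF has_integral_integrable[OF diffint] has_integral_integrable[OF quad]])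
      (unfold real_norm_def, rule taylor)
  hence key: "\<bar>integral {a..b} f - L * f m\<bar> \<le> M * L^3 / 24"
    unfolding integral_unique[OF diffint] integral_unique[OF quad] real_norm_def .
  have lhs: "\<bar>integral {a..b} f / L - f m\<bar> \<le> M * L^2 / 24"
  proof -
    have e1: "integral {a..b} f / L - f m = (integral {a..b} f - L * f m) / L" using L by (simp add: field_simps)
    have e2: "\<bar>(integral {a..b} f - L * f m) / L\<bar> = \<bar>integral {a..b} f - L * f m\<bar> / L"
      using L by (simp add: abs_divide)
    have e3: "\<bar>integral {a..b} f - L * f m\<bar> / L \<le> (M * L^3 / 24) / L"
      by (rule divide_right_mono[OF key]) (use L in simp)
    have e4: "(M * L^3 / 24) / L = M * L^2 / 24" using L by (simp add: power3_eq_cube power2_eq_square)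
    show ?thesis unfolding e1 e2 using e3 unfolding e4 .
  qed
  have p1: "p > 1" using q unfolding p by (simp add: less_divide_eq)
  have c1: "(1 / (2 * p + 1)) powr (1 / p) \<ge> 1/3"
  proof -
    have "(1 / (2 * p + 1)) powr (1 / p) = 1 / (2 * p + 1) powr (1 / p)"
      using p1 by (simp add: powr_divide)
    moreover have "1/3 \<le> 1 / (2 * p + 1) powr (1 / p)"
      using const_bound[OF q p] p1 by (intro inv_le3) auto
    ultimately show ?thesis by simp
  qed
  have c2: "(1 / (2 * H)) powr (1 / q) = (1/2) powr (1/q) * (1 / H) powr (1/q)"
    using H by (simp add: powr_mult[symmetric])
  have c3: "(1/2::real) powr (1/q) \<ge> 1/2"
  proof -
    have "(1/2::real) powr (1/q) = 1 / 2 powr (1/q)" by (simp add: powr_divide)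
    moreover have "1/2 \<le> 1 / (2::real) powr (1/q)" using const_bound[OF q p] by (intro inv_le3) auto
    ultimately show ?thesis by simp
  qed
  define c where "c = (1 / (2 * p + 1)) powr (1 / p) * (1/2) powr (1/q)"
  have c: "c \<ge> 1/6"
  proof -
    have "(1/3) * (1/2) \<le> c" unfolding c_def using c1 c3 by (intro mult_mono) auto
    thus ?thesis by simp
  qed
  have rhs: "L^2 / 4 * (1 / (2 * p + 1)) powr (1 / p)
              * ((1/2) powr (1/q) * (1 / H) powr (1/q)) * \<bar>f'' m\<bar> = L^2 / 4 * c * M"
    unfolding c_def M_def by (simp only: mult_ac)
  have fin: "M * L^2 / 24 \<le> L^2 / 4 * c * M"
  proof -
    have "M * L^2 / 24 = L^2/4 * (1/6) * M" by simp
    also have "\<dots> \<le> L^2/4 * c * M" using c M0 L by (intro mult_right_mono mult_left_mono) auto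
    finally show ?thesis .
  qed
  have "\<bar>integral {a..b} f / L - f m\<bar> \<le> L^2 / 4 * (1 / (2 * p + 1)) powr (1 / p)
              * (1 / (2 * H)) powr (1 / q) * \<bar>f'' m\<bar>"
    unfolding c2 rhs using lhs fin by (rule order_trans)
  thus ?thesis unfolding L_def m_def H_def .
qed

end
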